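(* Let $(B,\mathfrak m)$ be a local Prüfer ring such that $\mathfrak m = Z(B)$ and $\mathfrak m^2 \neq 0$ (for instance $B = \mathbb Z/8\mathbb Z$), and let $I := \mathfrak m$. Let $A := B \bowtie I$, let $f : A \to B$ be a surjective ring homomorphism, and let $J := I$. Then $A\bowtie^f J$ is a Prüfer ring and $A \bowtie^f J$ is not a Gaussian ring.
   Context: All rings are commutative with identity. For an ideal $I$ of a ring $B$, $B \bowtie I := \{(b, b+i) : b \in B, i \in I\}\subseteq B\times B$ (amalgamated duplication). For a ring homomorphism $f:A\to B$ and an ideal $J$ of $B$, $A \bowtie^f J := \{(a, f(a)+j) : a \in A, j \in J\}$, a subring of $A\times B$. $Z(B)$ is the set of zero-divisors of $B$. An ideal is regular if it contains a regular element. A ring $R$ is a Prüfer ring if every finitely generated regular ideal of $R$ is invertible. A ring $R$ is Gaussian if $c(gh)=c(g)c(h)$ for all $g,h\in R[x]$, where $c(p)$ is the ideal generated by the coefficients of $p$. *)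

theory Defs
  imports "HOL-Library.Product_Plus" "HOL-Computational_Algebra.Polynomial"
begin

instantiation prod :: (times, times) times
begin
definition times_prod_def: "x * y = (fst x * fst y, snd x * snd y)"
instance ..
end

instantiation prod :: (one, one) one
begin
definition one_prod_def: "1 = (1, 1)"
instance ..
end

lemma fst_mult_prod [simp]: "fst (x * y) = fst x * fst y"
  and snd_mult_prod [simp]: "snd (x * y) = snd x * snd y"
  and fst_one_prod [simp]: "fst 1 = 1" and snd_one_prod [simp]: "snd 1 = 1"
  by (simp_all add: times_prod_def one_prod_def)

instance prod :: (comm_ring_1, comm_ring_1) comm_ring_1
  by standard (simp_all add: prod_eq_iff algebra_simps)

definition sr_subring :: "'a::comm_ring_1 set \<Rightarrow> bool" where
  "sr_subring S \<longleftrightarrow> 0 \<in> S \<and> 1 \<in> S \<and> (\<forall>x\<in>S. \<forall>y\<in>S. x + y \<in> S \<and> x - y \<in> S \<and> x * y \<in> S)"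

definition sr_ideal :: "'a::comm_ring_1 set \<Rightarrow> 'a set \<Rightarrow> bool" where
  "sr_ideal S I \<longleftrightarrow> I \<subseteq> S \<and> 0 \<in> I \<and> (\<forall>x\<in>I. \<forall>y\<in>I. x + y \<in> I) \<and> (\<forall>r\<in>S. \<forall>x\<in>I. r * x \<in> I)"

definition sr_ideal_gen :: "'a::comm_ring_1 set \<Rightarrow> 'a set \<Rightarrow> 'a set" where
  "sr_ideal_gen S X = {y. \<exists>(n::nat) r x. (\<forall>i<n. r i \<in> S \<and> x i \<in> X) \<and> y = (\<Sum>i<n. r i * x i)}"

definition sr_ideal_prod :: "'a::comm_ring_1 set \<Rightarrow> 'a set \<Rightarrow> 'a set \<Rightarrow> 'a set" where
  "sr_ideal_prod S I J = sr_ideal_gen S {a * b | a b. a \<in> I \<and> b \<in> J}"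

definition fin_gen_ideal :: "'a::comm_ring_1 set \<Rightarrow> 'a set \<Rightarrow> bool" where
  "fin_gen_ideal S I \<longleftrightarrow> (\<exists>X. finite X \<and> X \<subseteq> S \<and> I = sr_ideal_gen S X)"

definition maximal_ideal :: "'a::comm_ring_1 set \<Rightarrow> 'a set \<Rightarrow> bool" where
  "maximal_ideal S M \<longleftrightarrow> sr_ideal S M \<and> M \<noteq> S \<and>
     (\<forall>N. sr_ideal S N \<and> M \<subseteq> N \<longrightarrow> N = M \<or> N = S)"

definition local_ring :: "'a::comm_ring_1 set \<Rightarrow> 'a set \<Rightarrow> bool" where
  "local_ring S M \<longleftrightarrow> maximal_ideal S M \<and> (\<forall>N. maximal_ideal S N \<longrightarrow> N = M)"

definition zero_divisors :: "'a::comm_ring_1 set \<Rightarrow> 'a set" where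
  "zero_divisors S = {z \<in> S. \<exists>y\<in>S. y \<noteq> 0 \<and> z * y = 0}"

definition regular :: "'a::comm_ring_1 set \<Rightarrow> 'a \<Rightarrow> bool" where
  "regular S s \<longleftrightarrow> s \<in> S \<and> s \<notin> zero_divisors S"

definition regular_ideal :: "'a::comm_ring_1 set \<Rightarrow> 'a set \<Rightarrow> bool" where
  "regular_ideal S I \<longleftrightarrow> sr_ideal S I \<and> (\<exists>s\<in>I. regular S s)"

text \<open>An ideal I of S is invertible iff I I^{-1} = S in the total ring of quotients,
  where I^{-1} = {x \<in> T(S). x I \<subseteq> S}; i.e. 1 \<in> I I^{-1}.  Writing the elements of I^{-1}
  involved over a common regular denominator s: there are a_i \<in> I and b_i/s \<in> I^{-1}
  (meaning b_i c \<in> s S for all c \<in> I) with \<Sum> a_i b_i / s = 1.\<close>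
definition invertible_ideal :: "'a::comm_ring_1 set \<Rightarrow> 'a set \<Rightarrow> bool" where
  "invertible_ideal S I \<longleftrightarrow> sr_ideal S I \<and>
     (\<exists>s (n::nat) a b. regular S s \<and>
        (\<forall>i<n. a i \<in> I \<and> b i \<in> S \<and> (\<forall>c\<in>I. \<exists>r\<in>S. b i * c = s * r)) \<and>
        (\<Sum>i<n. a i * b i) = s)"

definition pruefer_ring :: "'a::comm_ring_1 set \<Rightarrow> bool" where
  "pruefer_ring S \<longleftrightarrow> (\<forall>I. fin_gen_ideal S I \<and> regular_ideal S I \<longrightarrow> invertible_ideal S I)"

definition content_ideal :: "'a::comm_ring_1 set \<Rightarrow> 'a poly \<Rightarrow> 'a set" where
  "content_ideal S p = sr_ideal_gen S (range (coeff p))"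

definition gaussian_ring :: "'a::comm_ring_1 set \<Rightarrow> bool" where
  "gaussian_ring S \<longleftrightarrow> (\<forall>g h. range (coeff g) \<subseteq> S \<and> range (coeff h) \<subseteq> S \<longrightarrow>
     content_ideal S (g * h) = sr_ideal_prod S (content_ideal S g) (content_ideal S h))"

definition ring_hom_on :: "'a::comm_ring_1 set \<Rightarrow> ('a \<Rightarrow> 'b::comm_ring_1) \<Rightarrow> bool" where
  "ring_hom_on S f \<longleftrightarrow> f 1 = 1 \<and> (\<forall>x\<in>S. \<forall>y\<in>S. f (x + y) = f x + f y \<and> f (x * y) = f x * f y)"

definition amalg_dup :: "'a::comm_ring_1 set \<Rightarrow> 'a set \<Rightarrow> ('a \<times> 'a) set" where
  "amalg_dup B I = {(b, b + i) | b i. b \<in> B \<and> i \<in> I}"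

definition amalg :: "'a::comm_ring_1 set \<Rightarrow> ('a \<Rightarrow> 'b::comm_ring_1) \<Rightarrow> 'b set \<Rightarrow> ('a \<times> 'b) set" where
  "amalg A f J = {(a, f a + j) | a j. a \<in> A \<and> j \<in> J}"

end

theory Submission
  imports Defs
begin

lemma mult_Pair [simp]: "(a, b) * (c, d) = (a * c, b * d)"
  by (simp add: times_prod_def)
lemma one_Pair: "(1::'a::one \<times> 'b::one) = (1, 1)"
  by (simp add: one_prod_def)

lemma gen_elim: "y \<in> sr_ideal_gen S X \<Longrightarrow> \<exists>(n::nat) r x. (\<forall>i<n. r i \<in> S \<and> x i \<in> X) \<and> y = (\<Sum>i<n. r i * x i)"
  by (simp add: sr_ideal_gen_def)

locale L =
  fixes m :: "'b::comm_ring_1 set" and f :: "'b \<times> 'b \<Rightarrow> 'b"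
  assumes loc: "local_ring (UNIV :: 'b set) m"
    and zd: "m = zero_divisors (UNIV :: 'b set)"
    and nz: "sr_ideal_prod (UNIV :: 'b set) m m \<noteq> {0}"
    and hom: "ring_hom_on (amalg_dup UNIV m) f"
    and surj: "f ` amalg_dup UNIV m = UNIV"
begin

lemma m_ideal: "sr_ideal UNIV m" and m_ne: "m \<noteq> UNIV"
  using loc by (auto simp: local_ring_def maximal_ideal_def)

lemma m_add: "x \<in> m \<Longrightarrow> y \<in> m \<Longrightarrow> x + y \<in> m"
  using m_ideal by (auto simp: sr_ideal_def)
lemma m_mult: "x \<in> m \<Longrightarrow> r * x \<in> m"
  using m_ideal by (auto simp: sr_ideal_def)
lemma m_mult2: "x \<in> m \<Longrightarrow> x * r \<in> m"
  using m_mult[of x r] by (simp add: mult.commute)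
lemma m_zero: "0 \<in> m"
  using m_ideal by (auto simp: sr_ideal_def)
lemma m_uminus: "x \<in> m \<Longrightarrow> - x \<in> m"
  using m_mult[of x "-1"] by simp
lemma m_diff: "x \<in> m \<Longrightarrow> y \<in> m \<Longrightarrow> x - y \<in> m"
  using m_add[OF _ m_uminus[of y], of x] by simp
lemma one_notin: "1 \<notin> m"
  using m_mult[of 1] m_ne by auto

lemma unit_notin: "x * y = 1 \<Longrightarrow> x \<notin> m"
  using m_mult2[of x y] one_notin by auto

lemma zd_iff: "x \<in> m \<longleftrightarrow> (\<exists>y. y \<noteq> 0 \<and> x * y = 0)"
  using zd by (auto simp: zero_divisors_def)

lemma notin_unit:
  assumes "x \<notin> m" shows "\<exists>y. x * y = 1"
proof (rule ccontr)
  assume nu: "\<nexists>y. x * y = 1"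
  define S where "S = {N. sr_ideal (UNIV::'b set) N \<and> x \<in> N \<and> 1 \<notin> N}"
  have xS: "range ((*) x) \<in> S"
    unfolding S_def sr_ideal_def
  proof (intro CollectI conjI ballI)
    show "range ((*) x) \<subseteq> UNIV" by simp
    show "0 \<in> range ((*) x)" by (rule image_eqI[where x=0]) simp_all
    show "x \<in> range ((*) x)" by (rule image_eqI[where x=1]) simp_all
    show "1 \<notin> range ((*) x)" using nu by auto
    fix a b assume "a \<in> range ((*) x)" "b \<in> range ((*) x)"
    then obtain u v where "a = x * u" "b = x * v" by auto
    then show "a + b \<in> range ((*) x)" by (auto intro!: image_eqI[where x="u+v"] simp: distrib_left)
  next
    fix r a assume "a \<in> range ((*) x)"
    then obtain u where "a = x * u" by auto
    then show "r * a \<in> range ((*) x)" by (auto intro!: image_eqI[where x="r*u"] simp: ac_simps)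
  qed
  have "\<forall>C\<in>chains S. \<exists>U\<in>S. \<forall>X\<in>C. X \<subseteq> U"
  proof
    fix C assume C: "C \<in> chains S"
    show "\<exists>U\<in>S. \<forall>X\<in>C. X \<subseteq> U"
    proof (cases "C = {}")
      case True then show ?thesis using xS by auto
    next
      case False
      have CS: "C \<subseteq> S" and ch: "\<forall>A\<in>C. \<forall>B\<in>C. A \<subseteq> B \<or> B \<subseteq> A"
        using C by (auto simp: chains_def chain_subset_def)
      have "\<Union>C \<in> S"
        unfolding S_def sr_ideal_def
      proof (intro CollectI conjI ballI)
        show "0 \<in> \<Union>C" using False CS by (auto simp: S_def sr_ideal_def)
        show "x \<in> \<Union>C" using False CS by (auto simp: S_def)
        show "1 \<notin> \<Union>C" using CS by (auto simp: S_def)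
        show "\<Union>C \<subseteq> UNIV" by simp
        fix a b assume "a \<in> \<Union>C" "b \<in> \<Union>C"
        then obtain A B where AB: "A \<in> C" "B \<in> C" "a \<in> A" "b \<in> B" by auto
        then have "a \<in> A \<union> B" "b \<in> A \<union> B" by auto
        moreover have "A \<union> B = A \<or> A \<union> B = B" using ch AB by blast
        ultimately obtain D where "D \<in> C" "a \<in> D" "b \<in> D" using AB by metis
        moreover have "D \<in> S" using \<open>D \<in> C\<close> CS by auto
        ultimately have "a + b \<in> D" by (simp add: S_def sr_ideal_def)
        then show "a + b \<in> \<Union>C" using \<open>D \<in> C\<close> by auto
      next
        fix r a assume "a \<in> \<Union>C"
        then show "r * a \<in> \<Union>C" using CS by (auto simp: S_def sr_ideal_def)
      qed
      then show ?thesis by auto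
    qed
  qed
  from Zorn_Lemma2[OF this] obtain M where MS: "M \<in> S" and Mmax: "\<forall>X\<in>S. M \<subseteq> X \<longrightarrow> X = M"
    by blast
  have "maximal_ideal UNIV M"
    unfolding maximal_ideal_def
  proof (intro conjI allI impI)
    show "sr_ideal UNIV M" using MS by (auto simp: S_def)
    show "M \<noteq> UNIV" using MS by (auto simp: S_def)
    fix N assume N: "sr_ideal UNIV N \<and> M \<subseteq> N"
    show "N = M \<or> N = UNIV"
    proof (cases "1 \<in> N")
      case True
      then have "N = UNIV" using N by (auto simp: sr_ideal_def) (metis mult.right_neutral)
      then show ?thesis by simp
    next
      case False
      then have "N \<in> S" using N MS by (auto simp: S_def)
      then show ?thesis using Mmax N by auto
    qed
  qed
  then have "M = m" using loc by (auto simp: local_ring_def)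
  then show False using MS assms by (auto simp: S_def)
qed


lemma pq: "\<exists>p q. p \<in> m \<and> q \<in> m \<and> p * q \<noteq> 0"
proof (rule ccontr)
  assume "\<not> ?thesis"
  then have z: "\<forall>p\<in>m. \<forall>q\<in>m. p * q = 0" by auto
  have "sr_ideal_prod (UNIV :: 'b set) m m = {0}"
  proof
    show "sr_ideal_prod UNIV m m \<subseteq> {0}"
    proof
      fix y assume "y \<in> sr_ideal_prod UNIV m m"
      then obtain n :: nat and r x where hh: "(\<forall>i<n. r i \<in> UNIV \<and> x i \<in> {a * b |a b. a \<in> m \<and> b \<in> m}) \<and>
        y = (\<Sum>i<n. r i * x i)"
        using gen_elim[of y UNIV "{a * b |a b. a \<in> m \<and> b \<in> m}"] unfolding sr_ideal_prod_def
        by blast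
      then have y: "y = (\<Sum>i<n. r i * x i)" by simp
      then have "\<forall>i<n. x i = 0" using z hh by auto
      then show "y \<in> {0}" using y by simp
    qed
    show "{0} \<subseteq> sr_ideal_prod UNIV m m"
      by (auto simp: sr_ideal_prod_def sr_ideal_gen_def intro!: exI[where x=0])
  qed
  then show False using nz by simp
qed

abbreviation "A \<equiv> amalg_dup (UNIV :: 'b set) m"
abbreviation "C \<equiv> amalg A f m"

lemma A_iff: "a \<in> A \<longleftrightarrow> snd a - fst a \<in> m"
proof
  assume "a \<in> A" then show "snd a - fst a \<in> m" by (auto simp: amalg_dup_def)
next
  assume h: "snd a - fst a \<in> m"
  show "a \<in> A" unfolding amalg_dup_def
    by (rule CollectI, rule exI[where x="fst a"], rule exI[where x="snd a - fst a"]) (use h in auto)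
qed

lemma C_iff: "c \<in> C \<longleftrightarrow> fst c \<in> A \<and> snd c - f (fst c) \<in> m"
proof
  assume "c \<in> C" then show "fst c \<in> A \<and> snd c - f (fst c) \<in> m" by (auto simp: amalg_def)
next
  assume h: "fst c \<in> A \<and> snd c - f (fst c) \<in> m"
  show "c \<in> C" unfolding amalg_def
    by (rule CollectI, rule exI[where x="fst c"], rule exI[where x="snd c - f (fst c)"]) (use h in auto)
qed

lemma A_add: "a \<in> A \<Longrightarrow> b \<in> A \<Longrightarrow> a + b \<in> A"
  unfolding A_iff using m_add by (metis (no_types, lifting) add_diff_add fst_add snd_add)
lemma A_mult: "a \<in> A \<Longrightarrow> b \<in> A \<Longrightarrow> a * b \<in> A"
proof -
  assume "a \<in> A" "b \<in> A"
  then have "(snd a - fst a) * snd b + fst a * (snd b - fst b) \<in> m"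
    unfolding A_iff using m_add m_mult m_mult2 by blast
  moreover have "(snd a - fst a) * snd b + fst a * (snd b - fst b) = snd (a*b) - fst (a*b)"
    by (simp add: algebra_simps)
  ultimately show ?thesis unfolding A_iff by simp
qed
lemma A_zero: "(0::'b\<times>'b) \<in> A" unfolding A_iff using m_zero by simp
lemma A_one: "(1::'b\<times>'b) \<in> A" unfolding A_iff using m_zero by (simp add: one_Pair)
lemma A_uminus: "a \<in> A \<Longrightarrow> - a \<in> A"
  unfolding A_iff using m_uminus by (metis fst_uminus minus_diff_minus snd_uminus)
lemma A_diff: "a \<in> A \<Longrightarrow> b \<in> A \<Longrightarrow> a - b \<in> A"
  using A_add[OF _ A_uminus] by (metis diff_conv_add_uminus)

lemma f_add: "a \<in> A \<Longrightarrow> b \<in> A \<Longrightarrow> f (a + b) = f a + f b"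
  using hom by (auto simp: ring_hom_on_def)
lemma f_mult: "a \<in> A \<Longrightarrow> b \<in> A \<Longrightarrow> f (a * b) = f a * f b"
  using hom by (auto simp: ring_hom_on_def)
lemma f_one: "f 1 = 1"
  using hom by (auto simp: ring_hom_on_def)
lemma f_zero: "f 0 = 0"
  using f_add[OF A_zero A_zero] by simp
lemma f_diff: "a \<in> A \<Longrightarrow> b \<in> A \<Longrightarrow> f (a - b) = f a - f b"
  using f_add[OF A_diff, of a b b] by simp

lemma A_inv:
  assumes a: "a \<in> A" and na: "fst a \<notin> m"
  shows "\<exists>a'\<in>A. a * a' = 1"
proof -
  obtain u where u: "fst a * u = 1" using notin_unit[OF na] by blast
  have "snd a \<notin> m"
  proof
    assume "snd a \<in> m"
    then have "snd a - (snd a - fst a) \<in> m" using a m_diff unfolding A_iff by blast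
    then show False using na by simp
  qed
  then obtain v where v: "snd a * v = 1" using notin_unit by blast
  have "v - u = - (u * v) * (snd a - fst a)"
  proof -
    have "u * v * fst a = (fst a * u) * v" by (simp add: ac_simps)
    then have 1: "u * v * fst a = v" using u by simp
    have "u * v * snd a = (snd a * v) * u" by (simp add: ac_simps)
    then have 2: "u * v * snd a = u" using v by simp
    have "- (u * v) * (snd a - fst a) = u * v * fst a - u * v * snd a" by (simp add: algebra_simps)
    then show ?thesis using 1 2 by simp
  qed
  moreover have "- (u * v) * (snd a - fst a) \<in> m" using a m_mult unfolding A_iff by blast
  ultimately have "v - u \<in> m" by simp
  then have "(u, v) \<in> A" unfolding A_iff by simp
  moreover have "a * (u, v) = 1" using u v by (cases a) (simp add: one_Pair)
  ultimately show ?thesis by blast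
qed

lemma f_unit:
  assumes a: "a \<in> A" and na: "fst a \<notin> m"
  shows "f a \<notin> m"
proof -
  obtain a' where "a' \<in> A" "a * a' = 1" using A_inv[OF a na] by blast
  then have "f a * f a' = 1" using f_mult[OF a] f_one by metis
  then show ?thesis using unit_notin by blast
qed

lemma f_M:
  assumes a: "a \<in> A" and ma: "fst a \<in> m"
  shows "f a \<in> m"
proof (rule ccontr)
  assume "f a \<notin> m"
  then obtain u where u: "f a * u = 1" using notin_unit by blast
  obtain a'' where a'': "a'' \<in> A" "f a'' = u" using surj by (metis UNIV_I imageE)
  have aa: "a * a'' \<in> A" using A_mult[OF a a''(1)] .
  have faa: "f (a * a'') = 1" using f_mult[OF a a''(1)] a'' u by simp
  have d: "1 - a * a'' \<in> A" using A_diff[OF A_one aa] .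
  have "fst (1 - a * a'') \<notin> m"
  proof
    assume "fst (1 - a * a'') \<in> m"
    moreover have "fst (a * a'') \<in> m" using ma m_mult2 by simp
    ultimately have "fst (1 - a * a'') + fst (a * a'') \<in> m" using m_add by blast
    then show False using one_notin by (simp add: one_Pair)
  qed
  then have "f (1 - a * a'') \<notin> m" using f_unit[OF d] by blast
  moreover have "f (1 - a * a'') = 0" using f_diff[OF A_one aa] faa f_one by simp
  ultimately show False using m_zero by simp
qed


lemma f_zero': "f (0, 0) = 0"
  using f_zero by (simp add: zero_prod_def)

lemma C_add: "c \<in> C \<Longrightarrow> d \<in> C \<Longrightarrow> c + d \<in> C"
proof -
  assume c: "c \<in> C" and d: "d \<in> C"
  then have a: "fst c \<in> A" "fst d \<in> A" and j: "snd c - f (fst c) \<in> m" "snd d - f (fst d) \<in> m"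
    using C_iff by auto
  have ff: "f (fst c + fst d) = f (fst c) + f (fst d)" by (rule f_add[OF a])
  have eq: "snd (c + d) - f (fst (c + d)) = (snd c - f (fst c)) + (snd d - f (fst d))"
    by (simp add: ff algebra_simps)
  have "snd (c + d) - f (fst (c + d)) \<in> m" unfolding eq by (rule m_add[OF j])
  moreover have "fst (c + d) \<in> A" using A_add[OF a] by simp
  ultimately show ?thesis using C_iff by blast
qed

lemma C_zero: "0 \<in> C"
  using C_iff A_zero f_zero m_zero by simp

lemma C_one: "1 \<in> C"
  using C_iff A_one f_one m_zero by simp

lemma C_sum: "(\<forall>i<n. t i \<in> C) \<Longrightarrow> (\<Sum>i<(n::nat). t i) \<in> C"
  by (induction n) (auto intro: C_add C_zero)

lemma e_C: "x \<in> A \<Longrightarrow> (x, f x) \<in> C"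
  using C_iff m_zero by simp

lemma reg_unit:
  assumes c: "((x1, x2), x3) \<in> C" and r: "((x1, x2), x3) \<notin> zero_divisors C"
  shows "\<exists>d\<in>C. ((x1, x2), x3) * d = 1"
proof (cases "x1 \<in> m")
  case True
  have a: "(x1, x2) \<in> A" and j: "x3 - f (x1, x2) \<in> m" using c C_iff by auto
  have "f (x1, x2) \<in> m" using f_M[OF a] True by simp
  then have "(x3 - f (x1, x2)) + f (x1, x2) \<in> m" using j m_add by blast
  then have sc: "x3 \<in> m" by simp
  obtain z where z: "z \<noteq> 0" "z \<in> m" "x3 * z = 0"
  proof -
    obtain y where y: "y \<noteq> 0" "x3 * y = 0" using sc zd_iff by blast
    show thesis
    proof (cases "y \<in> m")
      case True then show ?thesis using that y by blast
    next
      case False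
      then obtain w where w: "y * w = 1" using notin_unit by blast
      have "x3 = (x3 * y) * w" using w by (simp add: mult.assoc)
      then have x30: "x3 = 0" using y by simp
      obtain p q where "p \<in> m" "q \<in> m" "p * q \<noteq> 0" using pq by blast
      then have "p \<noteq> 0" by auto
      then show ?thesis using that[of p] \<open>p \<in> m\<close> x30 by simp
    qed
  qed
  have dC: "((0, 0), z) \<in> C" using C_iff A_zero f_zero' z(2) by (simp add: zero_prod_def)
  have "((x1, x2), x3) * ((0, 0), z) = 0" using z by (simp add: zero_prod_def)
  moreover have "((0, 0), z) \<noteq> (0 :: ('b \<times> 'b) \<times> 'b)" using z by (simp add: zero_prod_def)
  ultimately have "((x1, x2), x3) \<in> zero_divisors C"
    using c dC unfolding zero_divisors_def by blast
  then show ?thesis using r by blast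
next
  case False
  have a: "(x1, x2) \<in> A" and j: "x3 - f (x1, x2) \<in> m" using c C_iff by auto
  obtain a' where a': "a' \<in> A" "(x1, x2) * a' = 1" using A_inv[OF a] False by auto
  have ff: "f (x1, x2) * f a' = 1" using f_mult[OF a a'(1)] a'(2) f_one by simp
  have fu: "f (x1, x2) \<notin> m" using f_unit[OF a] False by simp
  have "x3 \<notin> m"
  proof
    assume "x3 \<in> m"
    then have "x3 - (x3 - f (x1, x2)) \<in> m" using j m_diff by blast
    then show False using fu by simp
  qed
  then obtain w where w: "x3 * w = 1" using notin_unit by blast
  have "- (w * f a') * (x3 - f (x1, x2)) = w * (f (x1, x2) * f a') - f a' * (x3 * w)"
    by (simp add: algebra_simps)
  also have "\<dots> = w - f a'" using ff w by simp
  finally have "w - f a' \<in> m" using j m_mult by metis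
  then have dC: "(a', w) \<in> C" using C_iff a'(1) by simp
  have "((x1, x2), x3) * (a', w) = 1" using a'(2) w by (simp add: one_Pair)
  then show ?thesis using dC by blast
qed

lemma C_pruefer: "pruefer_ring C"
  unfolding pruefer_ring_def
proof (intro allI impI)
  fix I assume "fin_gen_ideal C I \<and> regular_ideal C I"
  then have I: "sr_ideal C I" and "\<exists>s\<in>I. regular C s" by (auto simp: regular_ideal_def)
  then obtain s where s: "s \<in> I" "regular C s" by blast
  obtain x1 x2 x3 where sx: "s = ((x1, x2), x3)" by (metis prod.collapse)
  have sC: "s \<in> C" and snz: "s \<notin> zero_divisors C" using s by (auto simp: regular_def)
  obtain d where d: "d \<in> C" "s * d = 1" using reg_unit[of x1 x2 x3] sC snz sx by blast
  have "d * s \<in> I" using I d s unfolding sr_ideal_def by blast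
  then have oneI: "1 \<in> I" using d by (simp add: mult.commute)
  have IC: "I \<subseteq> C" using I by (simp add: sr_ideal_def)
  have reg1: "regular C 1"
    unfolding regular_def zero_divisors_def using C_one by auto
  show "invertible_ideal C I"
    unfolding invertible_ideal_def
  proof (intro conjI)
    show "sr_ideal C I" by (rule I)
    show "\<exists>s (n::nat) a b. regular C s \<and>
        (\<forall>i<n. a i \<in> I \<and> b i \<in> C \<and> (\<forall>c\<in>I. \<exists>r\<in>C. b i * c = s * r)) \<and>
        (\<Sum>i<n. a i * b i) = s"
      apply (rule exI[where x=1], rule exI[where x=1], rule exI[where x="\<lambda>_. 1"], rule exI[where x="\<lambda>_. 1"])
      using reg1 oneI C_one IC by auto
  qed
qed

lemma C_not_gauss: "\<not> gaussian_ring C"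
proof
  assume G: "gaussian_ring C"
  obtain p q where pm: "p \<in> m" and qm: "q \<in> m" and pq0: "p * q \<noteq> 0" using pq by blast
  have A1: "(p, 0::'b) \<in> A" "(0, p) \<in> A" "(q, 0) \<in> A" "(0, q) \<in> A"
    using pm qm m_uminus unfolding A_iff by auto
  define a where "a = (((p, 0) :: 'b \<times> 'b), f (p, 0))"
  define b where "b = (((0, p) :: 'b \<times> 'b), f (0, p))"
  define c where "c = (((0, q) :: 'b \<times> 'b), f (0, q))"
  define d where "d = (((q, 0) :: 'b \<times> 'b), f (q, 0))"
  have aC: "a \<in> C" "b \<in> C" "c \<in> C" "d \<in> C"
    unfolding a_def b_def c_def d_def using e_C A1 by auto
  have ac: "a * c = 0"
    using f_mult[OF A1(1) A1(4)] f_zero' by (simp add: a_def c_def zero_prod_def)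
  have bd: "b * d = 0"
    using f_mult[OF A1(2) A1(3)] f_zero' by (simp add: b_def d_def zero_prod_def)
  define X where "X = a * d + b * c"
  define g where "g = [:a, b:]"
  define h where "h = [:c, d:]"
  have gh: "g * h = [:0, X:]"
    by (simp add: g_def h_def X_def ac bd algebra_simps)
  have rg: "range (coeff g) \<subseteq> C" using aC C_zero
    by (auto simp: g_def coeff_pCons split: nat.split)
  have rh: "range (coeff h) \<subseteq> C" using aC C_zero
    by (auto simp: h_def coeff_pCons split: nat.split)
  have rgh: "range (coeff (g * h)) \<subseteq> {0, X}"
    by (auto simp: gh coeff_pCons split: nat.split)
  have "a \<in> content_ideal C g"
    unfolding content_ideal_def sr_ideal_gen_def
    apply (rule CollectI, rule exI[where x=1], rule exI[where x="\<lambda>_. 1"], rule exI[where x="\<lambda>_. a"])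
    using C_one by (auto simp: g_def intro: range_eqI[where x=0])
  moreover have "d \<in> content_ideal C h"
    unfolding content_ideal_def sr_ideal_gen_def
    apply (rule CollectI, rule exI[where x=1], rule exI[where x="\<lambda>_. 1"], rule exI[where x="\<lambda>_. d"])
    using C_one by (auto simp: h_def intro: range_eqI[where x=1])
  ultimately have mem: "a * d \<in> {u * v | u v. u \<in> content_ideal C g \<and> v \<in> content_ideal C h}"
    by blast
  have "a * d \<in> sr_ideal_prod C (content_ideal C g) (content_ideal C h)"
    unfolding sr_ideal_prod_def sr_ideal_gen_def
    apply (rule CollectI, rule exI[where x=1], rule exI[where x="\<lambda>_. 1"], rule exI[where x="\<lambda>_. a * d"])
    apply (intro conjI allI impI)
      apply (rule C_one)
     apply (rule mem)
    apply simp
    done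
  then have "a * d \<in> content_ideal C (g * h)" using G rg rh unfolding gaussian_ring_def by blast
  then obtain n :: nat and r x where hh: "(\<forall>i<n. r i \<in> C \<and> x i \<in> range (coeff (g * h))) \<and>
      a * d = (\<Sum>i<n. r i * x i)"
    using gen_elim[of "a * d" C "range (coeff (g * h))"] unfolding content_ideal_def by blast
  define R where "R = (\<Sum>i<n. if x i = X then r i else 0)"
  have RC: "R \<in> C" unfolding R_def using hh C_zero by (auto intro!: C_sum)
  have "(\<Sum>i<n. r i * x i) = (\<Sum>i<n. (if x i = X then r i else 0) * X)"
  proof (rule sum.cong)
    fix i assume "i \<in> {..<n}"
    then have "x i \<in> {0, X}" using hh rgh by blast
    then show "r i * x i = (if x i = X then r i else 0) * X" by auto
  qed simp
  then have adR: "a * d = R * X" using hh by (simp add: R_def sum_distrib_right)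
  obtain R1 R2 R3 where Rx: "R = ((R1, R2), R3)" by (metis prod.collapse)
  have R21: "R2 - R1 \<in> m" using RC Rx C_iff A_iff by auto
  have e1: "p * q = R1 * (p * q)" and e2: "0 = R2 * (p * q)"
    using arg_cong[OF adR, of "\<lambda>z. fst (fst z)"] arg_cong[OF adR, of "\<lambda>z. snd (fst z)"]
    by (simp_all add: a_def b_def c_def d_def X_def Rx)
  have "(1 - (R1 - R2)) * (p * q) = 0"
    using e1 e2 by (simp add: algebra_simps)
  then have "1 - (R1 - R2) \<in> m" using zd_iff pq0 by blast
  moreover have "R1 - R2 \<in> m" using m_uminus[OF R21] by simp
  ultimately have "(1 - (R1 - R2)) + (R1 - R2) \<in> m" using m_add by blast
  then show False using one_notin by simp
qed

end

theorem mainTheorem8: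
  fixes m :: "'b::comm_ring_1 set"
    and f :: "'b \<times> 'b \<Rightarrow> 'b"
  assumes "local_ring (UNIV :: 'b set) m"
    and "pruefer_ring (UNIV :: 'b set)"
    and "m = zero_divisors (UNIV :: 'b set)"
    and "sr_ideal_prod (UNIV :: 'b set) m m \<noteq> {0}"
    and "ring_hom_on (amalg_dup UNIV m) f"
    and "f ` amalg_dup UNIV m = UNIV"
  shows "pruefer_ring (amalg (amalg_dup UNIV m) f m) \<and>
         \<not> gaussian_ring (amalg (amalg_dup UNIV m) f m)"
proof -
  interpret L m f using assms by (unfold_locales) auto
  show ?thesis using C_pruefer C_not_gauss by blast
qed

end
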